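(* $B(2)=1$, $B(3)=2$, $B(4)=4$, and $B(5)=6$.
   Context: Fix a field $\mathbb{F}$. All algebras are finite-dimensional, unital, not necessarily associative $\mathbb{F}$-algebras. For a finite generating set $S$ of an algebra $\mathcal{A}$, a word in $S$ is any product (with any bracketing) of finitely many elements of $S$; its length is the number of factors, and $1$ is a word of length $0$. $L_i(S)$ is the linear span of all words in $S$ of length at most $i$. The length of $S$ is $l(S)=\min\{k\ge0: L_k(S)=\mathcal{A}\}$, and $l(\mathcal{A})=\max\{l(S): S\text{ a finite generating set of }\mathcal{A}\}$. For a natural number $n\ge2$, $B(n)$ denotes the maximal integer $l>0$ such that for every $j\in\{1,\ldots,l\}$ there exists an algebra of dimension $n$ and length $j$. *)

theory Defs
  imports Main
begin

text \<open>An n-dimensional algebra over a field 'a is represented (up to isomorphism)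
on the coordinate space F^n = functions nat => 'a vanishing at indices >= n,
with bilinear multiplication given by structure constants c i j k.\<close>

definition carrier :: "nat \<Rightarrow> (nat \<Rightarrow> 'a::field) set" where
  "carrier n = {v. \<forall>i\<ge>n. v i = 0}"

definition amult :: "nat \<Rightarrow> (nat \<Rightarrow> nat \<Rightarrow> nat \<Rightarrow> 'a::field)
                    \<Rightarrow> (nat \<Rightarrow> 'a) \<Rightarrow> (nat \<Rightarrow> 'a) \<Rightarrow> (nat \<Rightarrow> 'a)" where
  "amult n c x y = (\<lambda>k. if k < n then (\<Sum>i<n. \<Sum>j<n. x i * y j * c i j k) else 0)"

definition is_unital_alg :: "nat \<Rightarrow> (nat \<Rightarrow> nat \<Rightarrow> nat \<Rightarrow> 'a::field) \<Rightarrow> (nat \<Rightarrow> 'a) \<Rightarrow> bool" where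
  "is_unital_alg n c u \<longleftrightarrow> u \<in> carrier n \<and>
     (\<forall>x\<in>carrier n. amult n c u x = x \<and> amult n c x u = x)"

inductive is_word :: "nat \<Rightarrow> (nat \<Rightarrow> nat \<Rightarrow> nat \<Rightarrow> 'a::field) \<Rightarrow> (nat \<Rightarrow> 'a)
                      \<Rightarrow> (nat \<Rightarrow> 'a) set \<Rightarrow> nat \<Rightarrow> (nat \<Rightarrow> 'a) \<Rightarrow> bool"
  for n c u S where
  word_one: "is_word n c u S 0 u"
| word_gen: "s \<in> S \<Longrightarrow> is_word n c u S 1 s"
| word_mult: "is_word n c u S i a \<Longrightarrow> is_word n c u S j b \<Longrightarrow> 1 \<le> i \<Longrightarrow> 1 \<le> j
               \<Longrightarrow> is_word n c u S (i + j) (amult n c a b)"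

definition lspan :: "(nat \<Rightarrow> 'a::field) set \<Rightarrow> (nat \<Rightarrow> 'a) set" where
  "lspan W = {(\<lambda>k. \<Sum>w\<in>T. f w * w k) | T f. finite T \<and> T \<subseteq> W}"

definition Lk :: "nat \<Rightarrow> (nat \<Rightarrow> nat \<Rightarrow> nat \<Rightarrow> 'a::field) \<Rightarrow> (nat \<Rightarrow> 'a)
                  \<Rightarrow> (nat \<Rightarrow> 'a) set \<Rightarrow> nat \<Rightarrow> (nat \<Rightarrow> 'a) set" where
  "Lk n c u S k = lspan {w. \<exists>i\<le>k. is_word n c u S i w}"

definition generates :: "nat \<Rightarrow> (nat \<Rightarrow> nat \<Rightarrow> nat \<Rightarrow> 'a::field) \<Rightarrow> (nat \<Rightarrow> 'a)
                  \<Rightarrow> (nat \<Rightarrow> 'a) set \<Rightarrow> bool" where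
  "generates n c u S \<longleftrightarrow> finite S \<and> S \<subseteq> carrier n \<and> (\<exists>k. Lk n c u S k = carrier n)"

definition gen_length :: "nat \<Rightarrow> (nat \<Rightarrow> nat \<Rightarrow> nat \<Rightarrow> 'a::field) \<Rightarrow> (nat \<Rightarrow> 'a)
                  \<Rightarrow> (nat \<Rightarrow> 'a) set \<Rightarrow> nat" where
  "gen_length n c u S = (LEAST k. Lk n c u S k = carrier n)"

definition alg_length :: "nat \<Rightarrow> (nat \<Rightarrow> nat \<Rightarrow> nat \<Rightarrow> 'a::field) \<Rightarrow> (nat \<Rightarrow> 'a) \<Rightarrow> nat \<Rightarrow> bool" where
  "alg_length n c u l \<longleftrightarrow>
     (\<exists>S. generates n c u S \<and> gen_length n c u S = l) \<and>
     (\<forall>S. generates n c u S \<longrightarrow> gen_length n c u S \<le> l)"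

definition B :: "'a::field itself \<Rightarrow> nat \<Rightarrow> nat" where
  "B (_::'a itself) n = (GREATEST l. 0 < l \<and>
     (\<forall>j\<in>{1..l}. \<exists>(c::nat \<Rightarrow> nat \<Rightarrow> nat \<Rightarrow> 'a) u. is_unital_alg n c u \<and> alg_length n c u j))"

end

theory Submission
  imports Defs "HOL-Library.Function_Algebras" HOL.Vector_Spaces
begin

definition fscale :: "'a::field \<Rightarrow> (nat \<Rightarrow> 'a) \<Rightarrow> nat \<Rightarrow> 'a" where
  "fscale a f = (\<lambda>k. a * f k)"

interpretation fv: vector_space "fscale :: 'a::field \<Rightarrow> _"
  by unfold_locales (auto simp: fscale_def algebra_simps fun_eq_iff)

lemma sum_fun_apply: "(\<Sum>a\<in>A. f a) k = (\<Sum>a\<in>A. f a k)"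
  by (induction A rule: infinite_finite_induct) auto

lemma lspan_eq: "lspan W = fv.span W"
  unfolding lspan_def fv.span_explicit
  by (auto simp: fscale_def sum_fun_apply fun_eq_iff)

lemma Lk_span: "Lk n c u S k = fv.span {w. \<exists>i\<le>k. is_word n c u S i w}"
  by (simp add: Lk_def lspan_eq)

definition ev :: "nat \<Rightarrow> nat \<Rightarrow> 'a::field" where
  "ev i = (\<lambda>k. if k = i then 1 else 0)"

lemma carrier_subspace: "fv.subspace (carrier n :: (nat \<Rightarrow> 'a::field) set)"
  unfolding fv.subspace_def carrier_def by (auto simp: fscale_def)

lemma ev_carrier: "i < n \<Longrightarrow> ev i \<in> carrier n"
  by (auto simp: ev_def carrier_def)

lemma carrier_span: "carrier n \<subseteq> fv.span (ev ` {..<n} :: (nat \<Rightarrow> 'a::field) set)"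
proof
  fix v :: "nat \<Rightarrow> 'a" assume v: "v \<in> carrier n"
  have "v = (\<Sum>i<n. fscale (v i) (ev i))"
  proof
    fix k
    show "v k = (\<Sum>i<n. fscale (v i) (ev i)) k"
    proof -
      have "(\<Sum>i<n. fscale (v i) (ev i)) k = (\<Sum>i<n. v i * (if k = i then 1 else 0))"
        by (simp add: sum_fun_apply fscale_def ev_def)
      also have "\<dots> = (\<Sum>i<n. (if k = i then v i else 0))"
        by (rule sum.cong) auto
      also have "\<dots> = (if k < n then v k else 0)" by (simp add: sum.delta)
      finally show ?thesis using v by (auto simp: carrier_def)
    qed
  qed
  also have "\<dots> \<in> fv.span (ev ` {..<n})"
    by (intro fv.span_sum fv.span_scale fv.span_base) auto
  finally show "v \<in> fv.span (ev ` {..<n})" .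
qed

lemma card_ev: "card (ev ` {..<n} :: (nat \<Rightarrow> 'a::field) set) \<le> n"
  using card_image_le[of "{..<n}" ev] by simp

lemma amult_carrier: "amult n c x y \<in> carrier n"
  by (simp add: amult_def carrier_def)

lemma amult_add_left: "amult n c (x + y) z = amult n c x z + amult n c y z"
  by (auto simp: amult_def fun_eq_iff algebra_simps sum.distrib)

lemma amult_add_right: "amult n c z (x + y) = amult n c z x + amult n c z y"
  by (auto simp: amult_def fun_eq_iff algebra_simps sum.distrib)

lemma amult_scale_left: "amult n c (fscale a x) z = fscale a (amult n c x z)"
  by (auto simp: amult_def fun_eq_iff fscale_def sum_distrib_left mult.assoc)

lemma amult_scale_right: "amult n c z (fscale a x) = fscale a (amult n c z x)"
  by (auto simp: amult_def fun_eq_iff fscale_def sum_distrib_left algebra_simps)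

lemma amult_zero_left: "amult n c 0 z = 0"
  by (auto simp: amult_def fun_eq_iff)

lemma amult_zero_right: "amult n c z 0 = 0"
  by (auto simp: amult_def fun_eq_iff)

lemma amult_span:
  assumes V: "fv.subspace V" and AB: "\<And>a b. a \<in> A \<Longrightarrow> b \<in> Q \<Longrightarrow> amult n c a b \<in> V"
    and x: "x \<in> fv.span A" and y: "y \<in> fv.span Q"
  shows "amult n c x y \<in> V"
proof -
  have inner: "amult n c a y \<in> V" if a: "a \<in> A" for a
    using y
  proof (induction rule: fv.span_induct_alt)
    case base then show ?case using V amult_zero_right fv.subspace_0 by metis
  next
    case (step d b z)
    have "amult n c a (fscale d b + z) = fscale d (amult n c a b) + amult n c a z"
      by (simp only: amult_add_right amult_scale_right)
    then show ?case using V AB[OF a] step fv.subspace_add fv.subspace_scale by metis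
  qed
  show ?thesis using x
  proof (induction rule: fv.span_induct_alt)
    case base then show ?case using V amult_zero_left fv.subspace_0 by metis
  next
    case (step d a z)
    have "amult n c (fscale d a + z) y = fscale d (amult n c a y) + amult n c z y"
      by (simp only: amult_add_left amult_scale_left)
    then show ?case using V inner step fv.subspace_add fv.subspace_scale by metis
  qed
qed

lemma word_carrier:
  assumes "S \<subseteq> carrier n" "u \<in> carrier n"
  shows "is_word n c u S i w \<Longrightarrow> w \<in> carrier n"
  by (induction rule: is_word.induct) (use assms amult_carrier in auto)

lemma word0: "is_word n c u S 0 w \<Longrightarrow> w = u"
  by (cases rule: is_word.cases) auto

lemma word_ge2:
  assumes "is_word n c u S m w" "2 \<le> m"
  shows "\<exists>i j a b. is_word n c u S i a \<and> is_word n c u S j b \<and> 1 \<le> i \<and> 1 \<le> j \<and> i + j = m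
     \<and> w = amult n c a b"
  using assms by (cases rule: is_word.cases) auto

lemma unital_u_carrier: "is_unital_alg n c u \<Longrightarrow> u \<in> carrier n"
  by (simp add: is_unital_alg_def)

lemma Lk_mono: "k \<le> k' \<Longrightarrow> Lk n c u S k \<subseteq> Lk n c u S k'"
  unfolding Lk_span by (rule fv.span_mono) (use le_trans in blast)

lemma word_in_Lk: "is_word n c u S i w \<Longrightarrow> i \<le> k \<Longrightarrow> w \<in> Lk n c u S k"
  unfolding Lk_span by (rule fv.span_base) auto

lemma Lk_subspace: "fv.subspace (Lk n c u S k)"
  unfolding Lk_span by simp

lemma Lk_carrier:
  assumes "S \<subseteq> carrier n" "u \<in> carrier n"
  shows "Lk n c u S k \<subseteq> carrier n"
  unfolding Lk_span
  by (rule fv.span_minimal) (use word_carrier[OF assms] carrier_subspace in auto)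

lemma Lk_mult:
  assumes U: "is_unital_alg n c u" and S: "S \<subseteq> carrier n"
    and v: "v \<in> Lk n c u S x" and w: "w \<in> Lk n c u S y"
  shows "amult n c v w \<in> Lk n c u S (x + y)"
proof -
  have uc: "u \<in> carrier n" using U by (simp add: is_unital_alg_def)
  have "amult n c a b \<in> Lk n c u S (x + y)"
    if a: "a \<in> {w. \<exists>i\<le>x. is_word n c u S i w}" and b: "b \<in> {w. \<exists>i\<le>y. is_word n c u S i w}" for a b
  proof -
    from a obtain i where i: "i \<le> x" "is_word n c u S i a" by auto
    from b obtain j where j: "j \<le> y" "is_word n c u S j b" by auto
    show ?thesis
    proof (cases "i = 0")
      case True
      then have "a = u" using i word0 by blast
      then have "amult n c a b = b" using U word_carrier[OF S uc j(2)] by (simp add: is_unital_alg_def)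
      then show ?thesis using j word_in_Lk by fastforce
    next
      case i0: False
      show ?thesis
      proof (cases "j = 0")
        case True
        then have "b = u" using j word0 by blast
        then have "amult n c a b = a" using U word_carrier[OF S uc i(2)] by (simp add: is_unital_alg_def)
        then show ?thesis using i word_in_Lk by fastforce
      next
        case False
        then have "is_word n c u S (i + j) (amult n c a b)"
          using i0 i j by (intro word_mult) auto
        then show ?thesis using i j word_in_Lk by fastforce
      qed
    qed
  qed
  then show ?thesis
    using amult_span[OF Lk_subspace _ v[unfolded Lk_span] w[unfolded Lk_span]] by blast
qed


lemma u_nonzero:
  assumes U: "is_unital_alg n c (u::nat \<Rightarrow> 'a::field)" and n: "0 < n"
  shows "u \<noteq> 0"
proof
  assume u0: "u = 0"
  have "amult n c u (ev 0) = ev 0" using U ev_carrier[OF n] unfolding is_unital_alg_def by blast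
  then have "(ev 0 :: nat \<Rightarrow> 'a) = 0" using u0 amult_zero_left by metis
  then show False by (metis ev_def zero_fun_def one_neq_zero)
qed

lemma L0_eq: "Lk n c u S 0 = fv.span {u}"
proof -
  have "{w. \<exists>i\<le>0. is_word n c u S i w} = {u}"
    using word0 word_one by fastforce
  then show ?thesis by (simp add: Lk_span)
qed

lemma jump_closed:
  assumes U: "is_unital_alg n c u" and S: "S \<subseteq> carrier n"
    and m: "2 \<le> m" and J: "Lk n c u S (m - 1) \<noteq> Lk n c u S m"
  shows "\<exists>a b. 1 \<le> a \<and> 1 \<le> b \<and> a + b = m \<and> Lk n c u S (a - 1) \<noteq> Lk n c u S a
     \<and> Lk n c u S (b - 1) \<noteq> Lk n c u S b"
proof -
  let ?L = "Lk n c u S"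
  have sub: "?L (m - 1) \<subseteq> ?L m" by (rule Lk_mono) simp
  obtain i w where iw: "i \<le> m" "is_word n c u S i w" "w \<notin> ?L (m - 1)"
  proof -
    { assume "\<forall>i w. i \<le> m \<longrightarrow> is_word n c u S i w \<longrightarrow> w \<in> ?L (m - 1)"
      then have "?L m \<subseteq> ?L (m - 1)"
        unfolding Lk_span[of n c u S m]
        by (intro fv.span_minimal Lk_subspace) auto
      with sub J have False by blast }
    then show ?thesis using that by blast
  qed
  have im: "i = m"
  proof (rule ccontr)
    assume "i \<noteq> m" then have "i \<le> m - 1" using iw by simp
    then show False using iw word_in_Lk by blast
  qed
  obtain a b w1 w2 where d: "is_word n c u S a w1" "is_word n c u S b w2" "1 \<le> a" "1 \<le> b"
    "a + b = m" "w = amult n c w1 w2"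
    using word_ge2[OF iw(2)[unfolded im] m] by blast
  have A: "?L (a - 1) \<noteq> ?L a"
  proof
    assume eq: "?L (a - 1) = ?L a"
    have "w1 \<in> ?L (a - 1)" using eq word_in_Lk[OF d(1)] by simp
    then have "amult n c w1 w2 \<in> ?L (a - 1 + b)"
      using Lk_mult[OF U S] word_in_Lk[OF d(2)] by blast
    then show False using iw d by (simp add: im)
  qed
  have Bb: "?L (b - 1) \<noteq> ?L b"
  proof
    assume eq: "?L (b - 1) = ?L b"
    have "w2 \<in> ?L (b - 1)" using eq word_in_Lk[OF d(2)] by simp
    then have "amult n c w1 w2 \<in> ?L (a + (b - 1))"
      using Lk_mult[OF U S] word_in_Lk[OF d(1)] by blast
    moreover have "a + (b - 1) = m - 1" using d by simp
    ultimately show False using iw d by (simp add: im)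
  qed
  show ?thesis using A Bb d by blast
qed

lemma jump_count:
  assumes U: "is_unital_alg n c (u::nat \<Rightarrow> 'a::field)" and S: "S \<subseteq> carrier n" and n: "0 < n"
  shows "\<exists>X. finite X \<and> fv.independent X \<and> X \<subseteq> Lk n c u S m \<and> Lk n c u S m \<subseteq> fv.span X
     \<and> card {k\<in>{1..m}. Lk n c u S (k - 1) \<noteq> Lk n c u S k} + 1 \<le> card X"
proof (induction m)
  case 0
  have "u \<noteq> 0" by (rule u_nonzero[OF U n])
  then show ?case
    by (intro exI[of _ "{u}"]) (auto simp: L0_eq fv.span_base)
next
  case (Suc m)
  let ?L = "Lk n c u S"
  let ?J = "\<lambda>m. {k\<in>{1..m}. ?L (k - 1) \<noteq> ?L k}"
  obtain X where X: "finite X" "fv.independent X" "X \<subseteq> ?L m" "?L m \<subseteq> fv.span X"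
    "card (?J m) + 1 \<le> card X" using Suc by blast
  have sub: "?L m \<subseteq> ?L (Suc m)" by (rule Lk_mono) simp
  have uc: "u \<in> carrier n" using U by (simp add: is_unital_alg_def)
  show ?case
  proof (cases "?L m = ?L (Suc m)")
    case True
    have "?J (Suc m) = ?J m" using True by (auto simp: le_Suc_eq)
    then show ?thesis using X True by (intro exI[of _ X]) auto
  next
    case False
    have J: "?J (Suc m) = insert (Suc m) (?J m)" using False by (auto simp: le_Suc_eq)
    obtain Y where Y: "X \<subseteq> Y" "Y \<subseteq> ?L (Suc m)" "fv.independent Y" "?L (Suc m) \<subseteq> fv.span Y"
      using fv.maximal_independent_subset_extend[of X "?L (Suc m)"] X sub by blast
    have "Y \<subseteq> fv.span (ev ` {..<n})"
      using Y(2) Lk_carrier[OF S uc] carrier_span by blast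
    then have fY: "finite Y" using fv.independent_span_bound[OF _ Y(3)] by blast
    have "X \<noteq> Y"
    proof
      assume "X = Y"
      then have "?L (Suc m) \<subseteq> ?L m"
        using Y(4) X(3) fv.span_minimal[OF X(3) Lk_subspace] by blast
      then show False using sub False by blast
    qed
    then have "card X < card Y" using Y(1) fY by (simp add: psubset_card_mono psubsetI)
    moreover have "card (?J (Suc m)) \<le> card (?J m) + 1"
      unfolding J by (simp add: card_insert_le_m1 card_insert_if)
    ultimately show ?thesis using X Y fY by (intro exI[of _ Y]) auto
  qed
qed

lemma jump_bound:
  assumes U: "is_unital_alg n c (u::nat \<Rightarrow> 'a::field)" and S: "S \<subseteq> carrier n" and n: "0 < n"
  shows "card {k\<in>{1..m}. Lk n c u S (k - 1) \<noteq> Lk n c u S k} + 1 \<le> n"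
proof -
  obtain X where X: "finite X" "fv.independent X" "X \<subseteq> Lk n c u S m"
     "card {k\<in>{1..m}. Lk n c u S (k - 1) \<noteq> Lk n c u S k} + 1 \<le> card X"
    using jump_count[OF U S n, of m] by blast
  have uc: "u \<in> carrier n" using U by (simp add: is_unital_alg_def)
  have "X \<subseteq> fv.span (ev ` {..<n})"
    using X(3) Lk_carrier[OF S uc] carrier_span by blast
  then have "card X \<le> card (ev ` {..<n} :: (nat \<Rightarrow> 'a) set)"
    using fv.independent_span_bound[OF _ X(2)] by blast
  moreover have "card (ev ` {..<n} :: (nat \<Rightarrow> 'a) set) \<le> n" by (rule card_ev)
  ultimately show ?thesis using X(4) by linarith
qed

lemma comb12:
  fixes J :: "nat set"
  assumes pos: "\<forall>m\<in>J. 1 \<le> m"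
    and cl: "\<forall>m\<in>J. 2 \<le> m \<longrightarrow> (\<exists>a\<in>J. \<exists>b\<in>J. a + b = m)"
  shows "m \<in> J \<Longrightarrow> 2 \<le> m \<Longrightarrow> 1 \<in> J \<and> 2 \<in> J"
proof (induction m rule: less_induct)
  case (less m)
  then obtain a b where ab: "a \<in> J" "b \<in> J" "a + b = m" using cl by blast
  have "a \<ge> 1" "b \<ge> 1" using ab pos by auto
  show ?case
  proof (cases "2 \<le> a")
    case True
    have "a < m" using ab \<open>b \<ge> 1\<close> by auto
    then show ?thesis using less.IH[of a] ab True by blast
  next
    case a1: False
    show ?thesis
    proof (cases "2 \<le> b")
      case True
      have "b < m" using ab \<open>a \<ge> 1\<close> by auto
      then show ?thesis using less.IH[of b] ab True by blast
    next
      case False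
      then have "a = 1" "b = 1" using a1 \<open>a \<ge> 1\<close> \<open>b \<ge> 1\<close> by auto
      then have "m = 2" using ab by simp
      then show ?thesis using ab less \<open>a = 1\<close> by simp
    qed
  qed
qed


lemma comb:
  fixes J :: "nat set"
  assumes fin: "finite J" and pos: "\<forall>m\<in>J. 1 \<le> m"
    and cl: "\<forall>m\<in>J. 2 \<le> m \<longrightarrow> (\<exists>a\<in>J. \<exists>b\<in>J. a + b = m)"
  shows "(2 \<in> J \<longrightarrow> 2 \<le> card J) \<and> (3 \<in> J \<longrightarrow> 3 \<le> card J) \<and> (5 \<in> J \<longrightarrow> 4 \<le> card J)
    \<and> (7 \<in> J \<longrightarrow> 5 \<le> card J)"
proof (intro conjI impI)
  have dec: "\<exists>a. a \<in> J \<and> m - a \<in> J \<and> 1 \<le> a \<and> a < m" if "m \<in> J" "2 \<le> m" for m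
  proof -
    have "\<exists>a\<in>J. \<exists>b\<in>J. a + b = m" using mp[OF bspec[OF cl that(1)] that(2)] .
    then obtain a b where "a \<in> J" "b \<in> J" "a + b = m" by auto
    moreover have "1 \<le> a" "1 \<le> b" using pos calculation by auto
    ultimately show ?thesis by (intro exI[of _ a]) auto
  qed
  have c12: "1 \<in> J" "2 \<in> J" if "m \<in> J" "2 \<le> m" for m using comb12[OF pos cl] that by auto
  {
    assume "2 \<in> J"
    then have "{1,2} \<subseteq> J" using c12[OF \<open>2 \<in> J\<close>] by simp
    from card_mono[OF fin this] show "2 \<le> card J" by simp
  }
  {
    assume "3 \<in> J"
    then have "{1,2,3} \<subseteq> J" using c12[OF \<open>3 \<in> J\<close>] by simp
    from card_mono[OF fin this] show "3 \<le> card J" by simp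
  }
  {
    assume 5: "5 \<in> J"
    obtain a where a: "a \<in> J" "5 - a \<in> J" "1 \<le> a" "a < 5" using dec[OF 5] by auto
    have "\<exists>x. x \<in> J \<and> (x = 3 \<or> x = 4)"
      proof -
      have "a = 1 \<or> a = 2 \<or> a = 3 \<or> a = 4" using a by linarith
      then show ?thesis using a by (elim disjE) auto
    qed
    then obtain x where x: "x \<in> J" "x = 3 \<or> x = 4" by blast
    then have "{1,2,x,5} \<subseteq> J" using c12[OF 5] 5 by simp
    moreover have "card {1,2,x,(5::nat)} = 4" using x by auto
    ultimately show "4 \<le> card J" using card_mono[OF fin] by metis
  }
  {
    assume 7: "7 \<in> J"
    obtain a where a: "a \<in> J" "7 - a \<in> J" "1 \<le> a" "a < 7" using dec[OF 7] by auto
    have "\<exists>x y. x \<in> J \<and> y \<in> J \<and> x \<noteq> y \<and> x \<in> {3,4,5,6} \<and> y \<in> {3,4,5,6}"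
    proof -
      have h: "(3 \<in> J \<and> 4 \<in> J) \<or> 5 \<in> J \<or> 6 \<in> J"
        proof -
        have "a = 1 \<or> a = 2 \<or> a = 3 \<or> a = 4 \<or> a = 5 \<or> a = 6" using a by linarith
        then show ?thesis using a by (elim disjE) auto
      qed
      show ?thesis
      proof (cases "3 \<in> J \<and> 4 \<in> J")
        case True then show ?thesis by (intro exI[of _ 3] exI[of _ 4]) auto
      next
        case F: False
        show ?thesis
        proof (cases "5 \<in> J")
          case True
          obtain b where b: "b \<in> J" "5 - b \<in> J" "1 \<le> b" "b < 5" using dec[OF True] by auto
          have "\<exists>x. x \<in> J \<and> (x = 3 \<or> x = 4)"
            proof -
            have "b = 1 \<or> b = 2 \<or> b = 3 \<or> b = 4" using b by linarith
            then show ?thesis using b by (elim disjE) auto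
          qed
          then show ?thesis using True by fastforce
        next
          case False
          then have 6: "6 \<in> J" using h F by blast
          obtain b where b: "b \<in> J" "6 - b \<in> J" "1 \<le> b" "b < 6" using dec[OF 6] by auto
          have "\<exists>x. x \<in> J \<and> (x = 3 \<or> x = 4 \<or> x = 5)"
            proof -
            have "b = 1 \<or> b = 2 \<or> b = 3 \<or> b = 4 \<or> b = 5" using b by linarith
            then show ?thesis using b by (elim disjE) auto
          qed
          then show ?thesis using 6 by fastforce
        qed
      qed
    qed
    then obtain x y where xy: "x \<in> J" "y \<in> J" "x \<noteq> y" "x \<in> {3,4,5,6}" "y \<in> {3,4,5,6}" by blast
    then have "{1,2,x,y,7} \<subseteq> J" using c12[OF 7] 7 by simp
    moreover have "card {1,2,x,y,(7::nat)} = 5" using xy by auto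
    ultimately show "5 \<le> card J" using card_mono[OF fin] by metis
  }
qed


lemma gen_jumps:
  assumes U: "is_unital_alg n c (u::nat \<Rightarrow> 'a::field)" and n: "0 < n"
    and G: "generates n c u S" and l: "gen_length n c u S = l" and l1: "1 \<le> l"
  shows "\<exists>J. finite J \<and> (\<forall>m\<in>J. 1 \<le> m) \<and> (\<forall>m\<in>J. 2 \<le> m \<longrightarrow> (\<exists>a\<in>J. \<exists>b\<in>J. a + b = m))
      \<and> l \<in> J \<and> card J + 1 \<le> n"
proof -
  let ?L = "Lk n c u S"
  let ?J = "{k\<in>{1..l}. ?L (k - 1) \<noteq> ?L k}"
  have S: "S \<subseteq> carrier n" using G by (simp add: generates_def)
  have ex: "\<exists>k. ?L k = carrier n" using G by (simp add: generates_def)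
  have Ll: "?L l = carrier n" using LeastI_ex[OF ex] l by (simp add: gen_length_def)
  have Ll1: "?L (l - 1) \<noteq> carrier n"
  proof
    assume "?L (l - 1) = carrier n"
    then have "l \<le> l - 1" using l unfolding gen_length_def by (metis Least_le)
    then show False using l1 by simp
  qed
  have "l \<in> ?J" using Ll Ll1 l1 by auto
  moreover have "\<forall>m\<in>?J. 2 \<le> m \<longrightarrow> (\<exists>a\<in>?J. \<exists>b\<in>?J. a + b = m)"
  proof (intro ballI impI)
    fix m assume m: "m \<in> ?J" "2 \<le> m"
    obtain a b where ab: "1 \<le> a" "1 \<le> b" "a + b = m" "?L (a - 1) \<noteq> ?L a" "?L (b - 1) \<noteq> ?L b"
      using jump_closed[OF U S m(2)] m(1) by auto
    have "a \<in> ?J" "b \<in> ?J" using ab m by auto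
    then show "\<exists>a\<in>?J. \<exists>b\<in>?J. a + b = m" using ab by blast
  qed
  moreover have "card ?J + 1 \<le> n" by (rule jump_bound[OF U S n])
  ultimately show ?thesis by (intro exI[of _ ?J]) auto
qed

lemma no_bad_length:
  assumes U: "is_unital_alg n c (u::nat \<Rightarrow> 'a::field)" and A: "alg_length n c u l"
  shows "(n = 2 \<longrightarrow> l \<noteq> 2) \<and> (n = 3 \<longrightarrow> l \<noteq> 3) \<and> (n = 4 \<longrightarrow> l \<noteq> 5) \<and> (n = 5 \<longrightarrow> l \<noteq> 7)"
proof -
  obtain S where S: "generates n c u S" "gen_length n c u S = l" using A by (auto simp: alg_length_def)
  { assume n: "2 \<le> n" and l: "2 \<le> l"
    obtain J where J: "finite J" "\<forall>m\<in>J. 1 \<le> m" "\<forall>m\<in>J. 2 \<le> m \<longrightarrow> (\<exists>a\<in>J. \<exists>b\<in>J. a + b = m)"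
      "l \<in> J" "card J + 1 \<le> n"
      using gen_jumps[OF U _ S(1) S(2)] n l by auto
    note cmb = comb[OF J(1) J(2) J(3)]
    have "(n = 2 \<longrightarrow> l \<noteq> 2) \<and> (n = 3 \<longrightarrow> l \<noteq> 3) \<and> (n = 4 \<longrightarrow> l \<noteq> 5) \<and> (n = 5 \<longrightarrow> l \<noteq> 7)"
      using cmb J(4) J(5) by auto
  }
  then show ?thesis by force
qed


definition cc :: "nat \<Rightarrow> (nat \<Rightarrow> nat) \<Rightarrow> (nat \<Rightarrow> nat) \<Rightarrow> (nat \<Rightarrow> nat) \<Rightarrow> nat \<Rightarrow> nat \<Rightarrow> nat \<Rightarrow> 'a::field" where
  "cc n wt p q i j k = (if i = 0 then (if j = k then 1 else 0) else if j = 0 then (if i = k then 1 else 0)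
     else if 0 < k \<and> k < n \<and> 2 \<le> wt k \<and> p k = i \<and> q k = j then 1 else 0)"

lemma sum_ev: "b < n \<Longrightarrow> (\<Sum>j<n. ev b j * f j) = (f b :: 'a::field)"
proof -
  assume b: "b < n"
  have "(\<Sum>j<n. ev b j * f j) = (\<Sum>j<n. if j = b then f j else 0)"
    by (rule sum.cong) (auto simp: ev_def)
  also have "\<dots> = f b" using b by (simp add: sum.delta)
  finally show ?thesis .
qed

lemma sum_delta_r: "(k::nat) < n \<Longrightarrow> (\<Sum>j<n. x j * (if j = k then 1 else 0)) = (x k :: 'a::field)"
proof -
  assume k: "k < n"
  have "(\<Sum>j<n. x j * (if j = k then 1 else 0)) = (\<Sum>j<n. if j = k then x j else 0)"
    by (rule sum.cong) auto
  also have "\<dots> = x k" using k by (simp add: sum.delta)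
  finally show ?thesis .
qed

lemma amult_ev_left:
  assumes "a < n" "k < n"
  shows "amult n c (ev a) y k = (\<Sum>j<n. y j * c a j k)"
proof -
  have "amult n c (ev a) y k = (\<Sum>i<n. ev a i * (\<Sum>j<n. y j * c i j k))"
    using assms by (simp add: amult_def sum_distrib_left mult.assoc)
  also have "\<dots> = (\<Sum>j<n. y j * c a j k)"
    using sum_ev[of a n "\<lambda>i. \<Sum>j<n. y j * c i j k"] assms by simp
  finally show ?thesis .
qed

lemma amult_ev_right:
  assumes "b < n" "k < n"
  shows "amult n c x (ev b) k = (\<Sum>i<n. x i * c i b k)"
proof -
  have "amult n c x (ev b) k = (\<Sum>i<n. x i * (\<Sum>j<n. ev b j * c i j k))"
    using assms by (simp add: amult_def sum_distrib_left algebra_simps)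
  also have "\<dots> = (\<Sum>i<n. x i * c i b k)" using assms by (simp add: sum_ev)
  finally show ?thesis .
qed

lemma amult_zero_terms:
  assumes "\<And>i j. i < n \<Longrightarrow> j < n \<Longrightarrow> x i * y j * c i j k = 0"
  shows "amult n c x y k = 0"
  using assms by (auto simp: amult_def intro!: sum.neutral)

lemma subspace_coord0: "fv.subspace {v :: nat \<Rightarrow> 'a::field. v t = 0}"
  unfolding fv.subspace_def by (auto simp: fscale_def)

locale walg =
  fixes n :: nat and wt p q :: "nat \<Rightarrow> nat" and M t :: nat
  assumes n: "0 < n" and wt0: "wt 0 = 0"
    and wtpos: "\<And>i. 0 < i \<Longrightarrow> i < n \<Longrightarrow> 1 \<le> wt i \<and> wt i \<le> M"
    and pq: "\<And>k. 0 < k \<Longrightarrow> k < n \<Longrightarrow> 2 \<le> wt k \<Longrightarrow>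
       0 < p k \<and> p k < n \<and> 0 < q k \<and> q k < n \<and> wt (p k) + wt (q k) = wt k"
    and uniq: "\<And>k k'. 0 < k \<Longrightarrow> k < n \<Longrightarrow> 2 \<le> wt k \<Longrightarrow> 0 < k' \<Longrightarrow> k' < n \<Longrightarrow> 2 \<le> wt k' \<Longrightarrow>
       p k = p k' \<Longrightarrow> q k = q k' \<Longrightarrow> k = k'"
    and t: "0 < t" "t < n" "wt t = M"
begin

lemma unital: "is_unital_alg n (cc n wt p q) (ev 0 :: nat \<Rightarrow> 'a::field)"
  unfolding is_unital_alg_def
proof (intro conjI ballI)
  show "(ev 0 :: nat \<Rightarrow> 'a) \<in> carrier n" using n by (rule ev_carrier)
next
  fix x :: "nat \<Rightarrow> 'a" assume x: "x \<in> carrier n"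
  show "amult n (cc n wt p q) (ev 0) x = x"
  proof
    fix k show "amult n (cc n wt p q) (ev 0) x k = x k"
    proof (cases "k < n")
      case True
      then show ?thesis using n by (simp add: amult_ev_left cc_def sum_delta_r)
    next
      case False then show ?thesis using x by (simp add: amult_def carrier_def)
    qed
  qed
  show "amult n (cc n wt p q) x (ev 0) = x"
  proof
    fix k show "amult n (cc n wt p q) x (ev 0) k = x k"
    proof (cases "k < n")
      case True
      have "amult n (cc n wt p q) x (ev 0) k = (\<Sum>i<n. x i * cc n wt p q i 0 k)"
        using True n by (simp add: amult_ev_right)
      also have "\<dots> = (\<Sum>i<n. x i * (if i = k then 1 else 0))"
        by (rule sum.cong) (auto simp: cc_def)
      finally have "amult n (cc n wt p q) x (ev 0) k = (\<Sum>i<n. x i * (if i = k then 1 else 0))" .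
      then show ?thesis using True sum_delta_r by metis
    next
      case False then show ?thesis using x by (simp add: amult_def carrier_def)
    qed
  qed
qed

definition Nge :: "nat \<Rightarrow> (nat \<Rightarrow> 'a::field) set" where
  "Nge a = {v \<in> carrier n. \<forall>i<n. wt i < a \<longrightarrow> v i = 0}"

lemma Nge_mult:
  assumes a: "1 \<le> a" and b: "1 \<le> b" and x: "x \<in> Nge a" and y: "y \<in> Nge b"
  shows "amult n (cc n wt p q) x y \<in> Nge (a + b)"
  unfolding Nge_def
proof (intro CollectI conjI allI impI amult_carrier)
  fix k assume k: "k < n" "wt k < a + b"
  show "amult n (cc n wt p q) x y k = 0"
  proof (rule amult_zero_terms)
    fix i j assume ij: "i < n" "j < n"
    show "x i * y j * cc n wt p q i j k = 0"
    proof (cases "x i = 0 \<or> y j = 0")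
      case True then show ?thesis by auto
    next
      case False
      then have wi: "a \<le> wt i" and wj: "b \<le> wt j" using x y ij by (auto simp: Nge_def not_less)
      have "i \<noteq> 0" using wi a wt0 by (cases i) auto
      moreover have "j \<noteq> 0" using wj b wt0 by (cases j) auto
      moreover have "\<not> (0 < k \<and> k < n \<and> 2 \<le> wt k \<and> p k = i \<and> q k = j)"
      proof
        assume h: "0 < k \<and> k < n \<and> 2 \<le> wt k \<and> p k = i \<and> q k = j"
        then have "wt i + wt j = wt k" using pq[of k] by auto
        then show False using wi wj k by simp
      qed
      ultimately have "cc n wt p q i j k = (0::'a)" by (simp add: cc_def)
      then show ?thesis by simp
    qed
  qed
qed

lemma Nge_big: "v \<in> Nge a \<Longrightarrow> M < a \<Longrightarrow> v = 0"
proof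
  fix i assume v: "v \<in> Nge a" and Ma: "M < a"
  show "v i = 0 i"
  proof (cases "i < n")
    case True
    have "wt i < a"
    proof (cases "i = 0")
      case True then show ?thesis using wt0 Ma by simp
    next
      case False then show ?thesis using wtpos[of i] \<open>i < n\<close> Ma by simp
    qed
    then show ?thesis using v True by (simp add: Nge_def)
  next
    case False then show ?thesis using v by (simp add: Nge_def carrier_def)
  qed
qed

lemma decomp:
  assumes S: "S \<subseteq> carrier n"
  shows "is_word n (cc n wt p q) (ev 0) S k w \<Longrightarrow> 1 \<le> k \<Longrightarrow>
    \<exists>a b. a \<in> Lk n (cc n wt p q) (ev 0) S (k - 1) \<and> b \<in> (Nge k :: (nat \<Rightarrow> 'a::field) set) \<and> w = a + b"
proof (induction rule: is_word.induct)
  case word_one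
  then show ?case by simp
next
  case (word_gen s)
  define a0 where "a0 = (fscale (s 0) (ev 0) :: nat \<Rightarrow> 'a)"
  have a: "a0 \<in> Lk n (cc n wt p q) (ev 0) S 0"
  proof -
    have "ev 0 \<in> Lk n (cc n wt p q) (ev 0 :: nat \<Rightarrow> 'a) S 0" by (rule word_in_Lk[OF is_word.word_one]) simp
    then show ?thesis unfolding a0_def by (rule fv.subspace_scale[OF Lk_subspace])
  qed
  have sc: "s \<in> carrier n" using word_gen.hyps S by blast
  have ac: "a0 \<in> carrier n" unfolding a0_def by (rule fv.subspace_scale[OF carrier_subspace ev_carrier[OF n]])
  have nb: "s - a0 \<in> Nge 1"
    unfolding Nge_def
  proof (intro CollectI conjI allI impI)
    show "s - a0 \<in> carrier n" by (rule fv.subspace_diff[OF carrier_subspace sc ac])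
    fix i assume i: "i < n" "wt i < 1"
    have "i = 0"
    proof (rule ccontr)
      assume "i \<noteq> 0"
      then have "1 \<le> wt i" using wtpos[of i] i(1) by simp
      then show False using i(2) by simp
    qed
    then show "(s - a0) i = 0" by (simp add: a0_def fscale_def ev_def)
  qed
  have eq: "s = a0 + (s - a0)" by (subst add.commute, rule diff_add_cancel[symmetric])
  have z: "(1::nat) - 1 = 0" by simp
  show ?case unfolding z using a nb eq by blast
next
  case (word_mult i w1 j w2)
  let ?c = "cc n wt p q" and ?u = "ev 0 :: nat \<Rightarrow> 'a"
  let ?L = "Lk n ?c ?u S"
  obtain a1 b1 where 1: "a1 \<in> ?L (i - 1)" "b1 \<in> Nge i" "w1 = a1 + b1" using word_mult.IH(1)[OF word_mult.hyps(3)] by blast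
  obtain a2 b2 where 2: "a2 \<in> ?L (j - 1)" "b2 \<in> Nge j" "w2 = a2 + b2" using word_mult.IH(2)[OF word_mult.hyps(4)] by blast
  have U: "is_unital_alg n ?c ?u" by (rule unital)
  have w2L: "w2 \<in> ?L j" using word_in_Lk[OF word_mult.hyps(2)] by simp
  have w1L: "w1 \<in> ?L i" using word_in_Lk[OF word_mult.hyps(1)] by simp
  have a1i: "a1 \<in> ?L i" using 1(1) Lk_mono[of "i - 1" i n ?c ?u S] by auto
  have "b1 = w1 - a1" unfolding 1(3) by (rule add_diff_cancel_left'[symmetric])
  then have b1L: "b1 \<in> ?L i" using fv.subspace_diff[OF Lk_subspace w1L a1i] by simp
  have t1: "amult n ?c a1 w2 \<in> ?L (i - 1 + j)"
    using Lk_mult[OF U S 1(1) w2L] .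
  have t2: "amult n ?c b1 a2 \<in> ?L (i + (j - 1))"
    using Lk_mult[OF U S b1L 2(1)] .
  have ij: "i - 1 + j = i + j - 1" "i + (j - 1) = i + j - 1" using word_mult.hyps(3,4) by auto
  have tA: "amult n ?c a1 w2 + amult n ?c b1 a2 \<in> ?L (i + j - 1)"
    using fv.subspace_add[OF Lk_subspace t1[unfolded ij(1)] t2[unfolded ij(2)]] .
  have t3: "amult n ?c b1 b2 \<in> Nge (i + j)"
    using Nge_mult[OF word_mult.hyps(3) word_mult.hyps(4) 1(2) 2(2)] .
  have e1: "amult n ?c w1 w2 = amult n ?c a1 w2 + amult n ?c b1 w2"
    unfolding 1(3) by (rule amult_add_left)
  have e2: "amult n ?c b1 w2 = amult n ?c b1 a2 + amult n ?c b1 b2"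
    unfolding 2(3) by (rule amult_add_right)
  have eq: "amult n ?c w1 w2 = (amult n ?c a1 w2 + amult n ?c b1 a2) + amult n ?c b1 b2"
    unfolding e1 e2 by (rule add.assoc[symmetric])
  show ?case using tA t3 eq by blast
qed

lemma word_in_LM:
  assumes S: "S \<subseteq> carrier n"
  shows "is_word n (cc n wt p q) (ev 0 :: nat \<Rightarrow> 'a::field) S k w \<Longrightarrow> w \<in> Lk n (cc n wt p q) (ev 0) S M"
proof (induction k arbitrary: w rule: less_induct)
  case (less k)
  show ?case
  proof (cases "k \<le> M")
    case True then show ?thesis using less.prems word_in_Lk by blast
  next
    case False
    then obtain a b where ab: "a \<in> Lk n (cc n wt p q) (ev 0) S (k - 1)" "b \<in> (Nge k :: (nat \<Rightarrow> 'a) set)" "w = a + b"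
      using decomp[OF S less.prems] by auto
    have "b = 0" using Nge_big[OF ab(2)] False by simp
    then have "w \<in> Lk n (cc n wt p q) (ev 0) S (k - 1)" using ab by simp
    moreover have "Lk n (cc n wt p q) (ev 0) S (k - 1) \<subseteq> Lk n (cc n wt p q) (ev 0) S M"
      unfolding Lk_span[of n "cc n wt p q" "ev 0" S "k - 1"]
    proof (rule fv.span_minimal[OF _ Lk_subspace])
      show "{w. \<exists>i\<le>k - 1. is_word n (cc n wt p q) (ev 0) S i w} \<subseteq> Lk n (cc n wt p q) (ev 0) S M"
      proof safe
        fix w i assume wi: "i \<le> k - 1" "is_word n (cc n wt p q) (ev 0) S i w"
        have "i < k" using wi(1) False by simp
        then show "w \<in> Lk n (cc n wt p q) (ev 0) S M" using less.IH wi(2) by blast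
      qed
    qed
    ultimately show ?thesis by blast
  qed
qed

lemma gen_bound:
  assumes G: "generates n (cc n wt p q) (ev 0 :: nat \<Rightarrow> 'a::field) S"
  shows "gen_length n (cc n wt p q) (ev 0) S \<le> M"
proof -
  have S: "S \<subseteq> carrier n" using G by (simp add: generates_def)
  obtain k0 where k0: "Lk n (cc n wt p q) (ev 0) S k0 = carrier n" using G by (auto simp: generates_def)
  have "Lk n (cc n wt p q) (ev 0) S k0 \<subseteq> Lk n (cc n wt p q) (ev 0) S M"
    unfolding Lk_span[of n "cc n wt p q" "ev 0" S k0]
    by (rule fv.span_minimal[OF _ Lk_subspace]) (use word_in_LM[OF S] in blast)
  moreover have "Lk n (cc n wt p q) (ev 0) S M \<subseteq> carrier n"
    using Lk_carrier[OF S ev_carrier[OF n]] .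
  ultimately have "Lk n (cc n wt p q) (ev 0) S M = carrier n" using k0 by blast
  then show ?thesis unfolding gen_length_def by (rule Least_le)
qed

definition S0 :: "(nat \<Rightarrow> 'a::field) set" where
  "S0 = ev ` {i. 0 < i \<and> i < n \<and> wt i = 1}"

lemma ev_prod:
  assumes k: "0 < k" "k < n" "2 \<le> wt k"
  shows "amult n (cc n wt p q) (ev (p k)) (ev (q k)) = (ev k :: nat \<Rightarrow> 'a::field)"
proof
  fix k'
  have pk: "0 < p k" "p k < n" "0 < q k" "q k < n" using pq[OF k] by auto
  show "amult n (cc n wt p q) (ev (p k)) (ev (q k)) k' = (ev k :: nat \<Rightarrow> 'a) k'"
  proof (cases "k' < n")
    case True
    have "amult n (cc n wt p q) (ev (p k)) (ev (q k)) k' = (\<Sum>j<n. ev (q k) j * (cc n wt p q (p k) j k' :: 'a))"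
      using True pk by (simp add: amult_ev_left mult.commute)
    also have "\<dots> = cc n wt p q (p k) (q k) k'" using pk by (simp add: sum_ev)
    also have "\<dots> = ev k k'"
      using pk k uniq[of k k'] True by (auto simp: cc_def ev_def)
    finally show ?thesis .
  next
    case False then show ?thesis using k by (simp add: amult_def ev_def)
  qed
qed

lemma words_all_aux:
  "\<forall>i. wt i = w \<longrightarrow> i < n \<longrightarrow> is_word n (cc n wt p q) (ev 0) (S0 :: (nat \<Rightarrow> 'a::field) set) w (ev i)"
proof (induction w rule: less_induct)
  case (less w)
  show ?case
  proof (intro allI impI)
    fix i assume wi: "wt i = w" and i: "i < n"
    show "is_word n (cc n wt p q) (ev 0) (S0 :: (nat \<Rightarrow> 'a) set) w (ev i)"
    proof (cases "i = 0")
      case True then show ?thesis using wt0 wi is_word.word_one by simp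
    next
      case i0: False
      show ?thesis
      proof (cases "wt i = 1")
        case True
        then have "ev i \<in> (S0 :: (nat \<Rightarrow> 'a) set)" using i0 i by (auto simp: S0_def)
        then show ?thesis using True wi is_word.word_gen by metis
      next
        case False
        then have w2: "2 \<le> wt i" using wtpos[of i] i0 i by simp
        have pk: "0 < p i" "p i < n" "0 < q i" "q i < n" "wt (p i) + wt (q i) = wt i"
          using pq[of i] i0 i w2 by auto
        have g1: "1 \<le> wt (p i)" "1 \<le> wt (q i)" using wtpos pk by auto
        then have lt: "wt (p i) < w" "wt (q i) < w" using pk wi by auto
        have "is_word n (cc n wt p q) (ev 0) (S0 :: (nat \<Rightarrow> 'a) set) (wt (p i) + wt (q i))
            (amult n (cc n wt p q) (ev (p i)) (ev (q i)))"
          using less.IH[OF lt(1)] less.IH[OF lt(2)] pk g1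
          by (intro is_word.word_mult) auto
        moreover have "amult n (cc n wt p q) (ev (p i)) (ev (q i)) = (ev i :: nat \<Rightarrow> 'a)"
          using i0 i w2 by (intro ev_prod) auto
        moreover have "wt (p i) + wt (q i) = w" using pk wi by simp
        ultimately show ?thesis by metis
      qed
    qed
  qed
qed

lemma words_all:
  "i < n \<Longrightarrow> is_word n (cc n wt p q) (ev 0) (S0 :: (nat \<Rightarrow> 'a::field) set) (wt i) (ev i)"
  using words_all_aux by blast

lemma words_hom:
  "is_word n (cc n wt p q) (ev 0) (S0 :: (nat \<Rightarrow> 'a::field) set) k w \<Longrightarrow> i < n \<Longrightarrow> wt i \<noteq> k \<Longrightarrow> w i = 0"
proof (induction arbitrary: i rule: is_word.induct)
  case (word_one i)
  then show ?case using wt0 by (cases i) (auto simp: ev_def)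
next
  case (word_gen s)
  then show ?case by (auto simp: S0_def ev_def)
next
  case (word_mult a x b y)
  show ?case
  proof (rule amult_zero_terms)
    fix i1 j1 assume ij: "i1 < n" "j1 < n"
    show "x i1 * y j1 * cc n wt p q i1 j1 i = 0"
    proof (cases "x i1 = 0 \<or> y j1 = 0")
      case True then show ?thesis by auto
    next
      case False
      then have wi: "wt i1 = a" and wj: "wt j1 = b" using word_mult.IH ij by blast+
      have "i1 \<noteq> 0" using wi word_mult.hyps wt0 by (cases i1) auto
      moreover have "j1 \<noteq> 0" using wj word_mult.hyps wt0 by (cases j1) auto
      moreover have "\<not> (0 < i \<and> i < n \<and> 2 \<le> wt i \<and> p i = i1 \<and> q i = j1)"
      proof
        assume h: "0 < i \<and> i < n \<and> 2 \<le> wt i \<and> p i = i1 \<and> q i = j1"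
        then have "wt i1 + wt j1 = wt i" using pq[of i] by auto
        then show False using wi wj word_mult.prems by simp
      qed
      ultimately have "cc n wt p q i1 j1 i = (0::'a)" by (simp add: cc_def)
      then show ?thesis by simp
    qed
  qed
qed

lemma S0_gen_length: "generates n (cc n wt p q) (ev 0) (S0 :: (nat \<Rightarrow> 'a::field) set)
   \<and> gen_length n (cc n wt p q) (ev 0) (S0 :: (nat \<Rightarrow> 'a) set) = M"
proof -
  let ?L = "Lk n (cc n wt p q) (ev 0) (S0 :: (nat \<Rightarrow> 'a) set)"
  have S0c: "(S0 :: (nat \<Rightarrow> 'a) set) \<subseteq> carrier n" by (auto simp: S0_def ev_carrier)
  have fin: "finite (S0 :: (nat \<Rightarrow> 'a) set)" by (simp add: S0_def)
  have evL: "ev i \<in> ?L M" if "i < n" for i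
  proof -
    have "wt i \<le> M" using wtpos[of i] wt0 that by (cases "i = 0") auto
    then show ?thesis using word_in_Lk[OF words_all[OF that]] by blast
  qed
  have LM: "?L M = carrier n"
  proof
    show "?L M \<subseteq> carrier n" using Lk_carrier[OF S0c ev_carrier[OF n]] .
    have "fv.span (ev ` {..<n}) \<subseteq> ?L M"
      by (rule fv.span_minimal[OF _ Lk_subspace]) (use evL in auto)
    then show "carrier n \<subseteq> ?L M" using carrier_span by blast
  qed
  have small: "\<not> (?L k = carrier n)" if k: "k < M" for k
  proof
    assume eq: "?L k = carrier n"
    have "?L k \<subseteq> {v. v t = 0}"
      unfolding Lk_span
    proof (rule fv.span_minimal[OF _ subspace_coord0], safe)
      fix w i assume "i \<le> k" "is_word n (cc n wt p q) (ev 0) (S0 :: (nat \<Rightarrow> 'a) set) i w"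
      then show "w t = 0" using words_hom[of i w t] t k by simp
    qed
    moreover have "(ev t :: nat \<Rightarrow> 'a) \<in> carrier n" using t by (simp add: ev_carrier)
    ultimately show False using eq by (auto simp: ev_def)
  qed
  have "gen_length n (cc n wt p q) (ev 0) (S0 :: (nat \<Rightarrow> 'a) set) = M"
    unfolding gen_length_def
  proof (rule Least_equality)
    show "?L M = carrier n" by (rule LM)
    show "\<And>y. ?L y = carrier n \<Longrightarrow> M \<le> y" using small by (meson not_le)
  qed
  then show ?thesis using fin S0c LM by (auto simp: generates_def)
qed

theorem walg_length:
  "is_unital_alg n (cc n wt p q) (ev 0 :: nat \<Rightarrow> 'a::field) \<and> alg_length n (cc n wt p q) (ev 0 :: nat \<Rightarrow> 'a) M"
  using unital S0_gen_length gen_bound unfolding alg_length_def by blast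

end


definition realized :: "'a::field itself \<Rightarrow> nat \<Rightarrow> nat \<Rightarrow> bool" where
  "realized T n j \<longleftrightarrow> (\<exists>(c::nat \<Rightarrow> nat \<Rightarrow> nat \<Rightarrow> 'a) u. is_unital_alg n c u \<and> alg_length n c u j)"

lemma walg_realized: "walg n wt p q M t \<Longrightarrow> realized TYPE('a::field) n M"
  unfolding realized_def using walg.walg_length[where 'a='a] by blast

lemma B_eq:
  assumes R: "\<forall>j\<in>{1..b}. realized TYPE('a::field) n j" and NR: "\<not> realized TYPE('a) n (Suc b)" and b: "0 < b"
  shows "B TYPE('a) n = b"
  unfolding B_def
proof (rule Greatest_equality)
  show "0 < b \<and> (\<forall>j\<in>{1..b}. \<exists>(c::nat \<Rightarrow> nat \<Rightarrow> nat \<Rightarrow> 'a) u. is_unital_alg n c u \<and> alg_length n c u j)"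
    using R b by (simp add: realized_def)
  fix y assume y: "0 < y \<and> (\<forall>j\<in>{1..y}. \<exists>(c::nat \<Rightarrow> nat \<Rightarrow> nat \<Rightarrow> 'a) u. is_unital_alg n c u \<and> alg_length n c u j)"
  show "y \<le> b"
  proof (rule ccontr)
    assume "\<not> y \<le> b"
    then have "Suc b \<in> {1..y}" by simp
    then show False using y NR by (auto simp: realized_def)
  qed
qed

lemma not_realized:
  "\<not> realized TYPE('a::field) 2 2" "\<not> realized TYPE('a) 3 3" "\<not> realized TYPE('a) 4 5" "\<not> realized TYPE('a) 5 7"
  unfolding realized_def using no_bad_length by blast+

lemma i2: "walg 2 (\<lambda>i. [0,1] ! i) (\<lambda>i. 0) (\<lambda>i. 0) 1 1"
  by unfold_locales (auto simp: less_Suc_eq numeral_eq_Suc)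

lemma i31: "walg 3 (\<lambda>i. [0,1,1] ! i) (\<lambda>i. 0) (\<lambda>i. 0) 1 1"
  by unfold_locales (auto simp: less_Suc_eq numeral_eq_Suc)
lemma i32: "walg 3 (\<lambda>i. [0,1,2] ! i) (\<lambda>i. [0,0,1] ! i) (\<lambda>i. [0,0,1] ! i) 2 2"
  by unfold_locales (auto simp: less_Suc_eq numeral_eq_Suc)

lemma i41: "walg 4 (\<lambda>i. [0,1,1,1] ! i) (\<lambda>i. 0) (\<lambda>i. 0) 1 1"
  by unfold_locales (auto simp: less_Suc_eq numeral_eq_Suc)
lemma i42: "walg 4 (\<lambda>i. [0,1,2,1] ! i) (\<lambda>i. [0,0,1,0] ! i) (\<lambda>i. [0,0,1,0] ! i) 2 2"
  by unfold_locales (auto simp: less_Suc_eq numeral_eq_Suc)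
lemma i43: "walg 4 (\<lambda>i. [0,1,2,3] ! i) (\<lambda>i. [0,0,1,2] ! i) (\<lambda>i. [0,0,1,1] ! i) 3 3"
  by unfold_locales (auto simp: less_Suc_eq numeral_eq_Suc)
lemma i44: "walg 4 (\<lambda>i. [0,1,2,4] ! i) (\<lambda>i. [0,0,1,2] ! i) (\<lambda>i. [0,0,1,2] ! i) 4 3"
  by unfold_locales (auto simp: less_Suc_eq numeral_eq_Suc)

lemma i51: "walg 5 (\<lambda>i. [0,1,1,1,1] ! i) (\<lambda>i. 0) (\<lambda>i. 0) 1 1"
  by unfold_locales (auto simp: less_Suc_eq numeral_eq_Suc)
lemma i52: "walg 5 (\<lambda>i. [0,1,2,1,1] ! i) (\<lambda>i. [0,0,1,0,0] ! i) (\<lambda>i. [0,0,1,0,0] ! i) 2 2"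
  by unfold_locales (auto simp: less_Suc_eq numeral_eq_Suc)
lemma i53: "walg 5 (\<lambda>i. [0,1,2,3,1] ! i) (\<lambda>i. [0,0,1,2,0] ! i) (\<lambda>i. [0,0,1,1,0] ! i) 3 3"
  by unfold_locales (auto simp: less_Suc_eq numeral_eq_Suc)
lemma i54: "walg 5 (\<lambda>i. [0,1,2,3,4] ! i) (\<lambda>i. [0,0,1,2,3] ! i) (\<lambda>i. [0,0,1,1,1] ! i) 4 4"
  by unfold_locales (auto simp: less_Suc_eq numeral_eq_Suc)
lemma i55: "walg 5 (\<lambda>i. [0,1,2,3,5] ! i) (\<lambda>i. [0,0,1,2,3] ! i) (\<lambda>i. [0,0,1,1,2] ! i) 5 4"
  by unfold_locales (auto simp: less_Suc_eq numeral_eq_Suc)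
lemma i56: "walg 5 (\<lambda>i. [0,1,2,3,6] ! i) (\<lambda>i. [0,0,1,2,3] ! i) (\<lambda>i. [0,0,1,1,3] ! i) 6 4"
  by unfold_locales (auto simp: less_Suc_eq numeral_eq_Suc)

lemma set_upto: "(\<forall>j\<in>{1..(b::nat)}. P j) \<longleftrightarrow> (\<forall>j. 1 \<le> j \<and> j \<le> b \<longrightarrow> P j)"
  by auto

theorem proposition4p9:
  shows "B TYPE('a::field) 2 = 1 \<and> B TYPE('a) 3 = 2 \<and> B TYPE('a) 4 = 4 \<and> B TYPE('a) 5 = 6"
proof (intro conjI)
  show "B TYPE('a::field) 2 = 1"
  proof (rule B_eq)
    show "\<forall>j\<in>{1..1}. realized TYPE('a) 2 j" using walg_realized[OF i2] by simp
    have e: "Suc 1 = (2::nat)" by simp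
    show "\<not> realized TYPE('a) 2 (Suc 1)" unfolding e by (rule not_realized(1))
  qed simp
  show "B TYPE('a::field) 3 = 2"
  proof (rule B_eq)
    have "realized TYPE('a) 3 1" "realized TYPE('a) 3 2"
      using walg_realized[OF i31] walg_realized[OF i32] by auto
    then show "\<forall>j\<in>{1..2}. realized TYPE('a) 3 j" by (auto simp: le_Suc_eq numeral_eq_Suc)
    have e: "Suc 2 = (3::nat)" by simp
    show "\<not> realized TYPE('a) 3 (Suc 2)" unfolding e by (rule not_realized(2))
  qed simp
  show "B TYPE('a::field) 4 = 4"
  proof (rule B_eq)
    have "realized TYPE('a) 4 1" "realized TYPE('a) 4 2" "realized TYPE('a) 4 3" "realized TYPE('a) 4 4"
      using walg_realized[OF i41] walg_realized[OF i42] walg_realized[OF i43] walg_realized[OF i44] by auto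
    then show "\<forall>j\<in>{1..4}. realized TYPE('a) 4 j"
    proof -
      assume h: "realized TYPE('a) 4 1" "realized TYPE('a) 4 2" "realized TYPE('a) 4 3" "realized TYPE('a) 4 4"
      have "\<And>j::nat. 1 \<le> j \<Longrightarrow> j \<le> 4 \<Longrightarrow> j = 1 \<or> j = 2 \<or> j = 3 \<or> j = 4" by linarith
      then show ?thesis using h by fastforce
    qed
    have e: "Suc 4 = (5::nat)" by simp
    show "\<not> realized TYPE('a) 4 (Suc 4)" unfolding e by (rule not_realized(3))
  qed simp
  show "B TYPE('a::field) 5 = 6"
  proof (rule B_eq)
    have h: "realized TYPE('a) 5 1" "realized TYPE('a) 5 2" "realized TYPE('a) 5 3" "realized TYPE('a) 5 4"
      "realized TYPE('a) 5 5" "realized TYPE('a) 5 6"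
      using walg_realized[OF i51] walg_realized[OF i52] walg_realized[OF i53] walg_realized[OF i54]
        walg_realized[OF i55] walg_realized[OF i56] by auto
    have "\<And>j::nat. 1 \<le> j \<Longrightarrow> j \<le> 6 \<Longrightarrow> j = 1 \<or> j = 2 \<or> j = 3 \<or> j = 4 \<or> j = 5 \<or> j = 6" by linarith
    then show "\<forall>j\<in>{1..6}. realized TYPE('a) 5 j" using h by fastforce
    have e: "Suc 6 = (7::nat)" by simp
    show "\<not> realized TYPE('a) 5 (Suc 6)" unfolding e by (rule not_realized(4))
  qed simp
qed

end
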